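(* (1) The set of reaction networks that have the capacity for weak reversibility strictly contains the set of weakly reversible reaction networks. (2) The set of reaction networks that have the capacity to be endotactic strictly contains the set of endotactic reaction networks.
   Context: A reaction network (E-graph) $\mathcal{G}=(\mathcal{V},\mathcal{E})$ is a finite directed graph whose nodes are distinct elements of a finite set $Y\subset\mathbb{R}^d_{\ge 0}$, with $\mathcal{V}\neq\emptyset$, every node incident to at least one edge, and no edge from a node to itself. For an edge $e$, $\mathbf{s}(e)$ is its source node, $\mathbf{t}(e)$ its target node, and $\mathbf{v}(e)=\mathbf{t}(e)-\mathbf{s}(e)$ its reaction vector. Given positive rate constants $(k_e)_{e\in\mathcal{E}}$, $\mathcal{G}$ generates the mass-action system $\frac{d\mathbf{x}}{dt}=\sum_{e\in\mathcal{E}}k_e\mathbf{x}^{\mathbf{s}(e)}\mathbf{v}(e)$, where $\mathbf{x}^{\mathbf{y}}=\prod_i x_i^{y_i}$ and $0^0=1$. Two networks $\mathcal{G}_1,\mathcal{G}_2$ have the capacity for dynamical equivalence if there exist positive rate constants for each such that the generated right-hand sides coincide for all $\mathbf{x}$. $\mathcal{G}$ is weakly reversible if every edge lies in a directed cycle. $\mathcal{G}$ is endotactic if for every $\mathbf{w}\in\mathbb{R}^d$ and every $e_i\in\mathcal{E}$ with $\mathbf{w}\cdot\mathbf{v}(e_i)<0$ there exists $e_j\in\mathcal{E}$ with $\mathbf{w}\cdot(\mathbf{s}(e_j)-\mathbf{s}(e_i))<0$ and $\mathbf{w}\cdot\mathbf{v}(e_j)>0$. A network has the capacity for weak reversibility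 (resp. to be endotactic) if it has the capacity for dynamical equivalence with some weakly reversible (resp. endotactic) network. *)

theory Defs
  imports Complex_Main
begin

text \<open>Vectors of R^d are represented as functions nat => real vanishing outside {..<d}.
  A reaction network (E-graph) in dimension d is its finite set of edges, each edge being
  the pair (source, target); the node set is the set of endpoints of edges.\<close>

type_synonym vec = "nat \<Rightarrow> real"
type_synonym edge = "vec \<times> vec"

definition nonneg_vec :: "nat \<Rightarrow> vec \<Rightarrow> bool" where
  "nonneg_vec d y \<longleftrightarrow> (\<forall>i<d. 0 \<le> y i) \<and> (\<forall>i\<ge>d. y i = 0)"

definition reaction_network :: "nat \<Rightarrow> edge set \<Rightarrow> bool" where
  "reaction_network d E \<longleftrightarrow> finite E \<and> E \<noteq> {} \<and>
     (\<forall>(s, t)\<in>E. s \<noteq> t \<and> nonneg_vec d s \<and> nonneg_vec d t)"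

definition src :: "edge \<Rightarrow> vec" where "src e = fst e"
definition tgt :: "edge \<Rightarrow> vec" where "tgt e = snd e"
definition rvec :: "edge \<Rightarrow> vec" where "rvec e = (\<lambda>i. tgt e i - src e i)"

text \<open>Monomial x^y = prod_i x_i^(y_i), with the convention 0^0 = 1.\<close>
definition monomial :: "nat \<Rightarrow> vec \<Rightarrow> vec \<Rightarrow> real" where
  "monomial d x y = (\<Prod>i<d. if y i = 0 then 1 else x i powr y i)"

definition mass_action :: "nat \<Rightarrow> edge set \<Rightarrow> (edge \<Rightarrow> real) \<Rightarrow> vec \<Rightarrow> vec" where
  "mass_action d E k x = (\<lambda>i. \<Sum>e\<in>E. k e * monomial d x (src e) * rvec e i)"

definition dyn_equiv_capacity :: "nat \<Rightarrow> edge set \<Rightarrow> edge set \<Rightarrow> bool" where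
  "dyn_equiv_capacity d E1 E2 \<longleftrightarrow>
     (\<exists>k1 k2. (\<forall>e\<in>E1. 0 < k1 e) \<and> (\<forall>e\<in>E2. 0 < k2 e) \<and>
        (\<forall>x. (\<forall>i<d. 0 \<le> x i) \<longrightarrow> (\<forall>i<d. mass_action d E1 k1 x i = mass_action d E2 k2 x i)))"

definition weakly_reversible :: "edge set \<Rightarrow> bool" where
  "weakly_reversible E \<longleftrightarrow> (\<forall>(s, t)\<in>E. (t, s) \<in> E\<^sup>*)"

definition dotp :: "nat \<Rightarrow> vec \<Rightarrow> vec \<Rightarrow> real" where
  "dotp d w v = (\<Sum>i<d. w i * v i)"

definition endotactic :: "nat \<Rightarrow> edge set \<Rightarrow> bool" where
  "endotactic d E \<longleftrightarrow>
     (\<forall>w ei. ei \<in> E \<and> dotp d w (rvec ei) < 0 \<longrightarrow>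
        (\<exists>ej\<in>E. dotp d w (\<lambda>i. src ej i - src ei i) < 0 \<and> dotp d w (rvec ej) > 0))"

definition capacity_weakly_reversible :: "nat \<Rightarrow> edge set \<Rightarrow> bool" where
  "capacity_weakly_reversible d E \<longleftrightarrow>
     (\<exists>E'. reaction_network d E' \<and> weakly_reversible E' \<and> dyn_equiv_capacity d E E')"

definition capacity_endotactic :: "nat \<Rightarrow> edge set \<Rightarrow> bool" where
  "capacity_endotactic d E \<longleftrightarrow>
     (\<exists>E'. reaction_network d E' \<and> endotactic d E' \<and> dyn_equiv_capacity d E E')"

end

theory Submission
  imports Defs
begin

definition c0 :: vec where "c0 = (\<lambda>i. 0)"
definition c1 :: vec where "c1 = (\<lambda>i. if i = 0 then 1 else 0)"
definition c2 :: vec where "c2 = (\<lambda>i. if i = 0 then 2 else 0)"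

definition EX1 :: "edge set" where "EX1 = {(c1,c0),(c1,c2),(c0,c1)}"
definition EX2 :: "edge set" where "EX2 = {(c0,c1),(c1,c0)}"

lemma c_at0 [simp]: "c0 0 = 0" "c1 0 = 1" "c2 0 = 2"
  by (simp_all add: c0_def c1_def c2_def)

lemma cdist: "c0 \<noteq> c1" "c1 \<noteq> c2" "c0 \<noteq> c2" "c1 \<noteq> c0" "c2 \<noteq> c1" "c2 \<noteq> c0"
  by (auto dest: fun_cong[where x=0])

lemma nn: "nonneg_vec 1 c0" "nonneg_vec 1 c1" "nonneg_vec 1 c2"
  by (auto simp: nonneg_vec_def c0_def c1_def c2_def)

lemma rn1: "reaction_network 1 EX1"
  using cdist nn by (auto simp: reaction_network_def EX1_def)

lemma rn2: "reaction_network 1 EX2"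
  using cdist nn by (auto simp: reaction_network_def EX2_def)

lemma self_equiv: "dyn_equiv_capacity d E E"
  unfolding dyn_equiv_capacity_def by (rule exI[of _ "\<lambda>_. 1"], rule exI[of _ "\<lambda>_. 1"]) simp

lemma mono1: "0 \<le> x (0::nat) \<Longrightarrow> monomial 1 x c0 = 1" "0 \<le> x 0 \<Longrightarrow> monomial 1 x c1 = x 0"
  by (simp_all add: monomial_def c0_def c1_def)

lemma equiv12: "dyn_equiv_capacity 1 EX1 EX2"
  unfolding dyn_equiv_capacity_def
proof (rule exI[of _ "\<lambda>e. if e = (c1,c0) then 2 else 1"], rule exI[of _ "\<lambda>_. 1"], intro conjI allI impI)
  fix x :: vec and i :: nat
  assume x: "\<forall>i<1. 0 \<le> x i" and i: "i < 1"
  hence i0: "i = 0" by simp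
  have x0: "0 \<le> x 0" using x by simp
  show "mass_action 1 EX1 (\<lambda>e. if e = (c1, c0) then 2 else 1) x i = mass_action 1 EX2 (\<lambda>_. 1) x i"
    using cdist unfolding mass_action_def EX1_def EX2_def i0
    by (simp add: mono1[of x] x0 src_def tgt_def rvec_def)
qed auto

lemma wr2: "weakly_reversible EX2"
  unfolding weakly_reversible_def EX2_def by auto

lemma nwr1: "\<not> weakly_reversible EX1"
proof
  assume "weakly_reversible EX1"
  hence "(c2, c1) \<in> EX1\<^sup>*" unfolding weakly_reversible_def EX1_def by auto
  then show False
    by (rule converse_rtranclE) (use cdist in \<open>auto simp: EX1_def\<close>)
qed

lemma dot1: "dotp 1 w v = w 0 * v 0" "dotp (Suc 0) w v = w 0 * v 0" by (simp_all add: dotp_def)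

lemma endo2: "endotactic 1 EX2"
  unfolding endotactic_def
proof (intro allI impI)
  fix w ei assume a: "ei \<in> EX2 \<and> dotp 1 w (rvec ei) < 0"
  show "\<exists>ej\<in>EX2. dotp 1 w (\<lambda>i. src ej i - src ei i) < 0 \<and> 0 < dotp 1 w (rvec ej)"
  proof (cases "ei = (c0,c1)")
    case True
    with a have "w 0 < 0" by (simp add: dot1 rvec_def src_def tgt_def)
    then show ?thesis using True
      by (intro bexI[of _ "(c1,c0)"]) (auto simp: dot1 rvec_def src_def tgt_def EX2_def)
  next
    case False
    with a have e: "ei = (c1,c0)" by (auto simp: EX2_def)
    with a have "w 0 > 0" by (simp add: dot1 rvec_def src_def tgt_def)
    then show ?thesis using e
      by (intro bexI[of _ "(c0,c1)"]) (auto simp: dot1 rvec_def src_def tgt_def EX2_def)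
  qed
qed

lemma nendo1: "\<not> endotactic 1 EX1"
proof
  assume "endotactic 1 EX1"
  hence "\<exists>ej\<in>EX1. dotp 1 (\<lambda>_. -1) (\<lambda>i. src ej i - src (c1,c2) i) < 0 \<and> 0 < dotp 1 (\<lambda>_. -1) (rvec ej)"
  proof -
    have "(c1,c2) \<in> EX1 \<and> dotp 1 (\<lambda>_. -1) (rvec (c1,c2)) < 0"
      by (simp add: EX1_def dot1 rvec_def src_def tgt_def)
    then show ?thesis using \<open>endotactic 1 EX1\<close> unfolding endotactic_def by blast
  qed
  then show False by (auto simp: EX1_def dot1 rvec_def src_def tgt_def)
qed

theorem theorem1:
  shows "{(d, E). reaction_network d E \<and> weakly_reversible E}
           \<subset> {(d, E). reaction_network d E \<and> capacity_weakly_reversible d E}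
       \<and> {(d, E). reaction_network d E \<and> endotactic d E}
           \<subset> {(d, E). reaction_network d E \<and> capacity_endotactic d E}"
proof (intro conjI psubsetI)
  show "{(d, E). reaction_network d E \<and> weakly_reversible E}
           \<subseteq> {(d, E). reaction_network d E \<and> capacity_weakly_reversible d E}"
    using self_equiv by (auto simp: capacity_weakly_reversible_def)
  show "{(d, E). reaction_network d E \<and> endotactic d E}
           \<subseteq> {(d, E). reaction_network d E \<and> capacity_endotactic d E}"
    using self_equiv by (auto simp: capacity_endotactic_def)
  have "(1, EX1) \<in> {(d, E). reaction_network d E \<and> capacity_weakly_reversible d E}"
    using rn1 rn2 wr2 equiv12 by (auto simp: capacity_weakly_reversible_def)
  moreover have "(1, EX1) \<notin> {(d, E). reaction_network d E \<and> weakly_reversible E}"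
    using nwr1 by auto
  ultimately show "{(d, E). reaction_network d E \<and> weakly_reversible E}
           \<noteq> {(d, E). reaction_network d E \<and> capacity_weakly_reversible d E}" by blast
  have "(1, EX1) \<in> {(d, E). reaction_network d E \<and> capacity_endotactic d E}"
    using rn1 rn2 endo2 equiv12 by (auto simp: capacity_endotactic_def)
  moreover have "(1, EX1) \<notin> {(d, E). reaction_network d E \<and> endotactic d E}"
    using nendo1 by auto
  ultimately show "{(d, E). reaction_network d E \<and> endotactic d E}
           \<noteq> {(d, E). reaction_network d E \<and> capacity_endotactic d E}" by blast
qed

end
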